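(* Suppose $N_1\gtrsim1$, $1\lesssim A\ll N_1$ and $k\ll N_1^2$. Decompose $[\frac14N_1,4N_1]$ into a sequence of consecutive intervals $\{I_j\}$, each of length $A^{-1}$. Then there is a mapping $j\mapsto\kappa(j)$ such that for all $x,y\ge0$ with $k\le x^2-y^2\le k+N_1A^{-1}$ and $\frac14N_1\le x,y\le4N_1$, the inclusion $y\in I_j$ implies $x\in I_{\kappa(j)-100}\cup\dots\cup I_{\kappa(j)+100}$. Moreover, as $j$ ranges over all indices, $\kappa(j)$ takes any particular value no more than $100$ times.
   Context: $A\lesssim B$ means $A\le cB$ for an absolute constant $c$; $A\ll B$ means $A\le cB$ for a sufficiently small absolute constant $c$; $N_1,A,k$ are real parameters (with $k$ a real number, not necessarily positive). *)

theory Defs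
  imports Complex_Main
begin

text \<open>The j-th interval of the decomposition starting at offset a, of length 1/A
  (half-open, so that consecutive intervals are disjoint and tile the line).\<close>
definition Ival :: "real \<Rightarrow> real \<Rightarrow> int \<Rightarrow> real set" where
  "Ival a A j = {a + real_of_int j / A ..< a + (real_of_int j + 1) / A}"

definition Idx :: "real \<Rightarrow> real \<Rightarrow> real \<Rightarrow> int set" where
  "Idx a A N1 = {j. Ival a A j \<inter> {N1/4 .. 4*N1} \<noteq> {}}"

end

theory Submission
  imports Defs
begin

lemma gap:
  fixes y y' k :: real
  assumes "0 < y" "y \<le> y'" "0 < y^2 + k" "y^2+k \<le> 4*y^2" "y'^2 + k \<le> 4*y'^2"
  shows "sqrt(y'^2+k) - sqrt(y^2+k) \<ge> (y'-y)/2"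
proof -
  define s where "s = sqrt(y^2+k)"
  define s' where "s' = sqrt(y'^2+k)"
  have y2: "y^2 \<le> y'^2" using assms by (intro power_mono) auto
  have ss: "s \<le> s'" unfolding s_def s'_def using y2 by simp
  have s0: "0 < s" unfolding s_def using assms by simp
  have "0 \<le> y'^2+k" using assms y2 by linarith
  hence sq: "s^2 = y^2+k" "s'^2 = y'^2+k" unfolding s_def s'_def using real_sqrt_pow2[of "y^2+k"] real_sqrt_pow2[of "y'^2+k"] assms(3) by linarith+
  have "(2*y)^2 = 4*y^2" "(2*y')^2 = 4*y'^2" by (simp_all add: power_mult_distrib)
  hence le2: "s \<le> 2*y" "s' \<le> 2*y'" unfolding s_def s'_def using assms
    by (auto intro!: real_le_lsqrt)
  have sum: "0 < s + s'" "s+s' \<le> 2*(y+y')" using le2 s0 ss by (auto simp: distrib_left)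
  have "(s'-s)*(s'+s) = (y'-y)*(y'+y)" using sq by (simp add: algebra_simps power2_eq_square)
  moreover have "(s'-s)*(s'+s) \<le> (s'-s)*(2*(y+y'))" using sum ss by (intro mult_left_mono) auto
  ultimately have "(y'-y)*(y'+y) \<le> (s'-s)*(2*(y+y'))" by simp
  hence "(y'-y) * (y+y') \<le> (2*(s'-s))*(y+y')" by (simp add: algebra_simps)
  moreover have "0 < y + y'" using assms by simp
  ultimately have "y'-y \<le> 2*(s'-s)" by (simp add: mult_le_cancel_right)
  thus ?thesis unfolding s_def s'_def by simp
qed

lemma xclose:
  fixes x t D m :: real
  assumes "0 \<le> t" "t \<le> x^2" "x^2 \<le> t + D" "m \<le> x" "0 < m"
  shows "sqrt t \<le> x" "x - sqrt t \<le> D/m"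
proof -
  have x0: "0 \<le> x" using assms by simp
  show sx: "sqrt t \<le> x" using assms x0 by (intro real_le_lsqrt)
  have "(x - sqrt t)*(x + sqrt t) = x^2 - t" using assms by (simp add: algebra_simps power2_eq_square)
  hence e: "(x - sqrt t)*(x + sqrt t) \<le> D" using assms by simp
  have "(x - sqrt t)*m \<le> (x - sqrt t)*(x + sqrt t)" using sx assms real_sqrt_ge_zero[OF assms(1)] by (intro mult_left_mono) linarith+
  hence "(x - sqrt t)*m \<le> D" using e by simp
  thus "x - sqrt t \<le> D/m" using assms by (simp add: pos_le_divide_eq)
qed


lemma main:
  fixes N1 A k a :: real
  assumes N1: "1 \<le> N1" and A1: "1 \<le> A" and AN: "A \<le> N1/1000" and kN: "k \<le> N1^2/1000"
    and a1: "a \<le> N1/4" and a2: "N1/4 < a + 1/A"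
  shows "\<exists>\<kappa>::int \<Rightarrow> int.
           (\<forall>j x y. j \<in> Idx a A N1 \<and> x \<ge> 0 \<and> y \<ge> 0 \<and>
                k \<le> x^2 - y^2 \<and> x^2 - y^2 \<le> k + N1 / A \<and>
                N1/4 \<le> x \<and> x \<le> 4*N1 \<and> N1/4 \<le> y \<and> y \<le> 4*N1 \<and>
                y \<in> Ival a A j \<longrightarrow>
                x \<in> (\<Union>i\<in>{\<kappa> j - 100 .. \<kappa> j + 100}. Ival a A i)) \<and>
           (\<forall>v. card {j \<in> Idx a A N1. \<kappa> j = v} \<le> 100)"
proof -
  have A0: "0 < A" using A1 by simp
  have N1000: "1000 \<le> N1" using A1 AN by simp
  have iA: "1/A \<le> 1" using A1 by simp
  have iA0: "0 < 1/A" using A0 by simp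
  have a0: "N1/4 - 1 < a" using a2 iA by linarith
  have apos: "0 < a" using a0 N1000 by linarith
  define y where "y j = a + of_int j / A" for j :: int
  define t where "t j = (y j)^2 + k" for j
  define F where "F j = floor((sqrt(t j) - a)*A)" for j
  define L where "L = ceiling(5*N1*A) + 10"
  define \<kappa> where "\<kappa> j = (if N1^2/32 \<le> t j then F j else j - L)" for j
  have Iv: "z \<in> Ival a A j \<longleftrightarrow> y j \<le> z \<and> z < y j + 1/A" for z j
    unfolding Ival_def y_def by (simp add: add_divide_distrib add.assoc)
  have idx: "N1/4 - 1/A < y j \<and> y j \<le> 4*N1" if "j \<in> Idx a A N1" for j
  proof -
    from that obtain z where "z \<in> Ival a A j" "N1/4 \<le> z" "z \<le> 4*N1" unfolding Idx_def by auto
    thus ?thesis using Iv by force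
  qed
  have ypos: "N1/5 \<le> y j" if "j \<in> Idx a A N1" for j
    using idx[OF that] iA N1000 by linarith
  have jub: "of_int j \<le> 4*N1*A" if "j \<in> Idx a A N1" for j
  proof -
    have "of_int j / A \<le> 4*N1" using idx[OF that] apos unfolding y_def by linarith
    thus ?thesis using A0 by (simp add: divide_le_eq mult.commute mult.left_commute)
  qed
  have k3: "k \<le> 3*(y j)^2" if "j \<in> Idx a A N1" for j
  proof -
    have "(N1/5)^2 \<le> (y j)^2" using ypos[OF that] N1000 by (intro power_mono) auto
    hence "N1^2 \<le> 25*(y j)^2" by (simp add: power_divide)
    thus ?thesis using kN zero_le_power2[of "y j"] by linarith
  qed
  have Fbound: "- N1*A/4 - 1 < of_int (F j)" if tj0: "0 \<le> t j" for j
  proof -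
    have "0 - a \<le> sqrt(t j) - a" using real_sqrt_ge_zero[OF tj0] by linarith
    hence "(0 - a)*A \<le> (sqrt(t j) - a)*A" using A0 by (intro mult_right_mono) auto
    moreover have "a*A \<le> N1/4*A" using a1 A0 by (intro mult_right_mono) auto
    hence "-N1*A/4 \<le> (0 - a)*A" by simp
    moreover have "(sqrt(t j) - a)*A - 1 < of_int (F j)" unfolding F_def by linarith
    ultimately show ?thesis by linarith
  qed
  have Lb: "5*N1*A + 10 \<le> of_int L" unfolding L_def by linarith
  have NA: "0 \<le> N1*A" using N1 A0 by simp
  have part1: "x \<in> (\<Union>i\<in>{\<kappa> j - 100 .. \<kappa> j + 100}. Ival a A i)"
    if j: "j \<in> Idx a A N1" and x0: "x \<ge> 0" and yy0: "yy \<ge> 0" and d1: "k \<le> x^2 - yy^2"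
      and d2: "x^2 - yy^2 \<le> k + N1 / A" and x1: "N1/4 \<le> x" and yy2: "yy \<le> 4*N1"
      and yyI: "yy \<in> Ival a A j" for j x yy
  proof -
    have yj: "y j \<le> yy" "yy < y j + 1/A" using yyI Iv by auto
    have yj0: "0 < y j" using ypos[OF j] N1000 by linarith
    have "(yy - y j)*(yy + y j) \<le> (1/A)*(8*N1)"
      using yj yj0 yy2 A0 by (intro mult_mono) auto
    hence sqd: "yy^2 - (y j)^2 \<le> 8*N1/A" by (simp add: algebra_simps power2_eq_square)
    have yy2': "(y j)^2 \<le> yy^2" using yj yj0 by (intro power_mono) auto
    have t1: "t j \<le> x^2" unfolding t_def using d1 yy2' by linarith
    have e9: "8*N1/A + N1/A = 9*N1/A" by (simp add: add_divide_distrib[symmetric])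
    have t2: "x^2 \<le> t j + 9*N1/A" unfolding t_def using d2 sqd e9 by linarith
    have x2: "(N1/4)^2 \<le> x^2" using x1 N1 by (intro power_mono) auto
    have "9*N1/A \<le> 9*N1" using A1 N1 by (simp add: divide_le_eq)
    moreover have "9*N1 \<le> N1^2/32" using N1000 by (simp add: power2_eq_square)
    moreover have "(N1/4)^2 = N1^2/16" by (simp add: power_divide)
    ultimately have tj: "N1^2/32 \<le> t j" using t1 t2 x2 by linarith
    hence kj: "\<kappa> j = F j" unfolding \<kappa>_def by simp
    have "0 \<le> N1^2/32" by simp
    hence tj0: "0 \<le> t j" using tj by linarith
    have N40: "0 < N1/4" using N1 by simp
    note xc = xclose[OF tj0 t1 t2 x1 N40]
    have "9*N1/A/(N1/4) = 36/A" using N1 by (simp add: field_simps)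
    hence xc2: "x - sqrt (t j) \<le> 36/A" using xc(2) by simp
    define i where "i = floor((x-a)*A)"
    have "of_int i \<le> (x-a)*A" "(x-a)*A < of_int i + 1" unfolding i_def by linarith+
    hence "of_int i / A \<le> x - a" "x - a < (of_int i + 1)/A" using A0
      by (simp_all add: divide_le_eq less_divide_eq)
    hence xi: "x \<in> Ival a A i" unfolding Ival_def by auto
    have "(sqrt (t j) - a)*A \<le> (x-a)*A" using xc(1) A0 by (intro mult_right_mono) auto
    hence lo: "F j \<le> i" unfolding F_def i_def by (intro floor_mono)
    have "(x-a)*A \<le> (sqrt (t j) - a + 36/A)*A" using xc2 A0 by (intro mult_right_mono) auto
    also have "\<dots> = (sqrt (t j) - a)*A + 36" using A0 by (simp add: distrib_right)
    finally have "(x-a)*A \<le> (sqrt (t j) - a)*A + 36" .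
    hence "i \<le> floor((sqrt (t j) - a)*A + 36)" unfolding i_def by (intro floor_mono)
    hence hi: "i \<le> F j + 36" unfolding F_def by simp
    show ?thesis using xi lo hi kj by (intro UN_I[of i]) auto
  qed
  have pair: "j' \<le> j + 1" if j: "j \<in> Idx a A N1" and j': "j' \<in> Idx a A N1"
     and eq: "\<kappa> j = \<kappa> j'" and le: "j \<le> j'" for j j'
  proof (cases "N1^2/32 \<le> t j")
    case True
    note Tj = True
    have P: "0 < N1^2/32" using N1 by simp
    show ?thesis
    proof (cases "N1^2/32 \<le> t j'")
      case True
      hence FF: "F j = F j'" using eq Tj unfolding \<kappa>_def by simp
      show ?thesis
      proof (rule ccontr)
        assume "\<not> j' \<le> j + 1"
        hence "of_int j + 2 \<le> (of_int j' :: real)" by linarith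
        hence "(of_int j + 2)/A \<le> of_int j'/A" using A0 by (simp add: divide_right_mono)
        hence yd: "y j + 2/A \<le> y j'" unfolding y_def by (simp add: add_divide_distrib)
        have yj0: "0 < y j" using ypos[OF j] N1000 by linarith
        have t0: "0 < (y j)^2 + k" using Tj P unfolding t_def by linarith
        have g: "sqrt(t j') - sqrt(t j) \<ge> (y j' - y j)/2" unfolding t_def
        proof (rule gap[OF yj0 _ t0])
          show "y j \<le> y j'" using yd iA0 by linarith
          show "(y j)^2 + k \<le> 4*(y j)^2" using k3[OF j] by linarith
          show "(y j')^2 + k \<le> 4*(y j')^2" using k3[OF j'] by linarith
        qed
        hence "sqrt(t j') - sqrt(t j) \<ge> 1/A" using yd by simp
        hence "(sqrt(t j) - a + 1/A)*A \<le> (sqrt(t j') - a)*A" using A0 by (intro mult_right_mono) auto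
        moreover have "(sqrt(t j) - a + 1/A)*A = (sqrt(t j) - a)*A + 1" using A0 by (simp add: distrib_right)
        ultimately have "(sqrt(t j) - a)*A + 1 \<le> (sqrt(t j') - a)*A" by simp
        hence "floor((sqrt(t j) - a)*A + 1) \<le> F j'" unfolding F_def by (intro floor_mono)
        thus False using FF unfolding F_def by simp
      qed
    next
      case False
      hence "F j = j' - L" using eq Tj unfolding \<kappa>_def by simp
      hence "of_int (F j) = of_int j' - (of_int L :: real)" by simp
      thus ?thesis using Fbound[of j] Tj P jub[OF j'] Lb NA by linarith
    qed
  next
    case False
    note Fj = False
    have P: "0 < N1^2/32" using N1 by simp
    show ?thesis
    proof (cases "N1^2/32 \<le> t j'")
      case True
      hence "F j' = j - L" using eq Fj unfolding \<kappa>_def by simp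
      hence "of_int (F j') = of_int j - (of_int L :: real)" by simp
      thus ?thesis using Fbound[of j'] True P jub[OF j] Lb NA by linarith
    next
      case False
      thus ?thesis using eq Fj unfolding \<kappa>_def by simp
    qed
  qed
  have part2: "card {j \<in> Idx a A N1. \<kappa> j = v} \<le> 100" for v
  proof (cases "{j \<in> Idx a A N1. \<kappa> j = v} = {}")
    case True show ?thesis by (simp only: True card.empty)
  next
    case False
    then obtain j0 where j0: "j0 \<in> Idx a A N1" "\<kappa> j0 = v" by auto
    have "{j \<in> Idx a A N1. \<kappa> j = v} \<subseteq> {j0 - 1 .. j0 + 1}"
    proof
      fix j assume "j \<in> {j \<in> Idx a A N1. \<kappa> j = v}"
      hence jj: "j \<in> Idx a A N1" "\<kappa> j = v" by auto
      show "j \<in> {j0 - 1 .. j0 + 1}"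
      proof (cases "j \<le> j0")
        case True thus ?thesis using pair[OF jj(1) j0(1)] jj j0 by auto
      next
        case False thus ?thesis using pair[OF j0(1) jj(1)] jj j0 by auto
      qed
    qed
    hence "card {j \<in> Idx a A N1. \<kappa> j = v} \<le> card {j0 - 1 .. j0 + 1}"
      by (intro card_mono) auto
    thus ?thesis by simp
  qed
  show ?thesis
  proof (rule exI[of _ \<kappa>], rule conjI)
    show "\<forall>v. card {j \<in> Idx a A N1. \<kappa> j = v} \<le> 100" using part2 by blast
  next
    show "\<forall>j x y. j \<in> Idx a A N1 \<and> x \<ge> 0 \<and> y \<ge> 0 \<and>
                k \<le> x^2 - y^2 \<and> x^2 - y^2 \<le> k + N1 / A \<and>
                N1/4 \<le> x \<and> x \<le> 4*N1 \<and> N1/4 \<le> y \<and> y \<le> 4*N1 \<and>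
                y \<in> Ival a A j \<longrightarrow>
                x \<in> (\<Union>i\<in>{\<kappa> j - 100 .. \<kappa> j + 100}. Ival a A i)"
    proof (intro allI impI)
      fix j x yy
      assume H: "j \<in> Idx a A N1 \<and> x \<ge> 0 \<and> yy \<ge> 0 \<and>
                k \<le> x^2 - yy^2 \<and> x^2 - yy^2 \<le> k + N1 / A \<and>
                N1/4 \<le> x \<and> x \<le> 4*N1 \<and> N1/4 \<le> yy \<and> yy \<le> 4*N1 \<and>
                yy \<in> Ival a A j"
      show "x \<in> (\<Union>i\<in>{\<kappa> j - 100 .. \<kappa> j + 100}. Ival a A i)"
        using H by (intro part1[of j x yy]) blast+
    qed
  qed
qed

theorem lemmaA1:
  shows "\<exists>C>0. \<exists>c>0. \<forall>(N1::real) (A::real) (k::real).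
     1 \<le> C * N1 \<and> 1 \<le> C * A \<and> A \<le> c * N1 \<and> k \<le> c * N1^2 \<longrightarrow>
     (\<forall>a::real. a \<le> N1/4 \<and> N1/4 < a + 1/A \<longrightarrow>
        (\<exists>\<kappa>::int \<Rightarrow> int.
           (\<forall>j x y. j \<in> Idx a A N1 \<and> x \<ge> 0 \<and> y \<ge> 0 \<and>
                k \<le> x^2 - y^2 \<and> x^2 - y^2 \<le> k + N1 / A \<and>
                N1/4 \<le> x \<and> x \<le> 4*N1 \<and> N1/4 \<le> y \<and> y \<le> 4*N1 \<and>
                y \<in> Ival a A j \<longrightarrow>
                x \<in> (\<Union>i\<in>{\<kappa> j - 100 .. \<kappa> j + 100}. Ival a A i)) \<and>
           (\<forall>v. card {j \<in> Idx a A N1. \<kappa> j = v} \<le> 100)))"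
proof (rule exI[of _ "1::real"], rule conjI, simp, rule exI[of _ "1/1000::real"], rule conjI, simp, intro allI impI)
  fix N1 A k a :: real
  assume h: "1 \<le> 1 * N1 \<and> 1 \<le> 1 * A \<and> A \<le> 1 / 1000 * N1 \<and> k \<le> 1 / 1000 * N1\<^sup>2"
    and ha: "a \<le> N1 / 4 \<and> N1 / 4 < a + 1 / A"
  show "\<exists>\<kappa>::int \<Rightarrow> int.
           (\<forall>j x y. j \<in> Idx a A N1 \<and> x \<ge> 0 \<and> y \<ge> 0 \<and>
                k \<le> x^2 - y^2 \<and> x^2 - y^2 \<le> k + N1 / A \<and>
                N1/4 \<le> x \<and> x \<le> 4*N1 \<and> N1/4 \<le> y \<and> y \<le> 4*N1 \<and>
                y \<in> Ival a A j \<longrightarrow>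
                x \<in> (\<Union>i\<in>{\<kappa> j - 100 .. \<kappa> j + 100}. Ival a A i)) \<and>
           (\<forall>v. card {j \<in> Idx a A N1. \<kappa> j = v} \<le> 100)"
    by (rule main) (use h ha in simp_all)
qed

end
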